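(* Let $M$ be a set of machines and $J$ a set of jobs with $|J|\le|M|^c$. Let $L$ and $l$ be integers with $2|M|^c\ge L\ge C(J)+D(J)$ and $l\ge 150c\ln|M|/\ln\ln|M|$. Then the probability that a uniformly random hash function $h:M^*\times I\to\{0,\dots,L-1\}$ is not $(L,l)$-good for $J$ is at most $\exp(-|J|\ln(l)/8)$.
   Context: Jobs: each job $j$ has a machine sequence $\mathrm{seq}(j)\in M^*$ (finite sequence of machines) and a unique identifier $\mathrm{ind}(j)\in I:=\{1,\dots,|M|^c\}$, where $c\ge1$ is a constant. Standing assumption: $|M|\ge32$. $C(J)=\max_{m\in M}\sum_{j\in J}|\{i:\mathrm{seq}(j)_i=m\}|$, $D(J)=\max_j\mathrm{len}(\mathrm{seq}(j))$. For $h$, write $h(j):=h(\mathrm{seq}(j),\mathrm{ind}(j))$ and $\mathrm{virt}(j,i)=h(j)+i$ for $i<\mathrm{len}(\mathrm{seq}(j))$ ($\infty$ if $i=\mathrm{len}(\mathrm{seq}(j))$). A bad pattern (for $M,L,l,J$) is a collection of sets $B_{T,m}$, for $0\le T<2L$ and $m\in M$, of pairs $(j,i)$ with $j\in J$, such that $\mathrm{seq}(j)_i=m$ for all $(j,i)\in B_{T,m}$; each $j$ appears at most once in $\bigsqcup B_{T,m}$; $|B_{T,m}|\in\{0\}\cup(l,|J|]$ for all $(T,m)$; and $\sum_{T,m}|B_{T,m}|>|J|/2$. It occurs for $h$ if $\mathrm{virt}(j,i)=T$ for all $(T,m)$ and $(j,i)\in B_{T,m}$. $h$ is $(L,l)$-good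 for $J$ if no bad pattern occurs for $h$. *)

theory Defs
  imports "HOL-Probability.Probability"
begin

text \<open>Jobs are elements of an abstract type 'j, described by a machine sequence
  seq j and an identifier ind j. Machines are elements of a finite set M.\<close>

definition idx_set :: "'m set \<Rightarrow> real \<Rightarrow> nat set" where
  "idx_set M c = {i. 1 \<le> i \<and> real i \<le> real (card M) powr c}"

definition occ :: "('j \<Rightarrow> 'm list) \<Rightarrow> 'j \<Rightarrow> 'm \<Rightarrow> nat" where
  "occ seq j m = card {i. i < length (seq j) \<and> seq j ! i = m}"

definition congestion :: "'m set \<Rightarrow> ('j \<Rightarrow> 'm list) \<Rightarrow> 'j set \<Rightarrow> nat" where
  "congestion M seq J = Max ((\<lambda>m. \<Sum>j\<in>J. occ seq j m) ` M)"

definition dilation :: "('j \<Rightarrow> 'm list) \<Rightarrow> 'j set \<Rightarrow> nat" where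
  "dilation seq J = Max (insert 0 ((\<lambda>j. length (seq j)) ` J))"

definition virt :: "('m list \<times> nat \<Rightarrow> nat) \<Rightarrow> ('j \<Rightarrow> 'm list) \<Rightarrow> ('j \<Rightarrow> nat)
    \<Rightarrow> 'j \<Rightarrow> nat \<Rightarrow> enat" where
  "virt h seq ind j i =
     (if i < length (seq j) then enat (h (seq j, ind j) + i) else \<infinity>)"

definition bad_pattern :: "'m set \<Rightarrow> nat \<Rightarrow> nat \<Rightarrow> ('j \<Rightarrow> 'm list) \<Rightarrow> 'j set
    \<Rightarrow> (nat \<Rightarrow> 'm \<Rightarrow> ('j \<times> nat) set) \<Rightarrow> bool" where
  "bad_pattern M L l seq J B \<longleftrightarrow>
     (\<forall>T<2*L. \<forall>m\<in>M. \<forall>(j,i)\<in>B T m. j \<in> J \<and> i < length (seq j) \<and> seq j ! i = m) \<and>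
     (\<forall>T1<2*L. \<forall>m1\<in>M. \<forall>T2<2*L. \<forall>m2\<in>M. \<forall>j i1 i2.
        (j,i1) \<in> B T1 m1 \<longrightarrow> (j,i2) \<in> B T2 m2 \<longrightarrow> T1 = T2 \<and> m1 = m2 \<and> i1 = i2) \<and>
     (\<forall>T<2*L. \<forall>m\<in>M. card (B T m) = 0 \<or> (l < card (B T m) \<and> card (B T m) \<le> card J)) \<and>
     real (\<Sum>T<2*L. \<Sum>m\<in>M. card (B T m)) > real (card J) / 2"

definition pattern_occurs :: "'m set \<Rightarrow> nat \<Rightarrow> ('m list \<times> nat \<Rightarrow> nat) \<Rightarrow> ('j \<Rightarrow> 'm list)
    \<Rightarrow> ('j \<Rightarrow> nat) \<Rightarrow> (nat \<Rightarrow> 'm \<Rightarrow> ('j \<times> nat) set) \<Rightarrow> bool" where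
  "pattern_occurs M L h seq ind B \<longleftrightarrow>
     (\<forall>T<2*L. \<forall>m\<in>M. \<forall>(j,i)\<in>B T m. virt h seq ind j i = enat T)"

definition good :: "'m set \<Rightarrow> nat \<Rightarrow> nat \<Rightarrow> ('m list \<times> nat \<Rightarrow> nat) \<Rightarrow> ('j \<Rightarrow> 'm list)
    \<Rightarrow> ('j \<Rightarrow> nat) \<Rightarrow> 'j set \<Rightarrow> bool" where
  "good M L l h seq ind J \<longleftrightarrow>
     \<not> (\<exists>B. bad_pattern M L l seq J B \<and> pattern_occurs M L h seq ind B)"

definition hash_space :: "'m set \<Rightarrow> real \<Rightarrow> nat \<Rightarrow> ('m list \<times> nat \<Rightarrow> nat) measure" where
  "hash_space M c L = PiM (lists M \<times> idx_set M c) (\<lambda>_. measure_pmf (pmf_of_set {0..<L}))"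

end

theory Submission
  imports Defs
begin


lemma binom_fact_le: "(n choose r) * fact r \<le> (n::nat) ^ r"
proof (cases "r \<le> n")
  case True
  have e: "fact r * fact (n - r) * (n choose r) = (fact n :: nat)" by (rule binomial_fact_lemma[OF True])
  have "(n choose r) * fact r = fact n div fact (n - r)"
    by (simp add: e[symmetric] mult.commute mult.left_commute)
  with fact_div_fact_le_pow[OF True] show ?thesis by simp
next
  case False then show ?thesis by (simp add: binomial_eq_0)
qed

lemma pow_le_exp_fact: "(real q)^q \<le> exp (real q) * fact q"
proof -
  have s: "summable (\<lambda>n. real q ^ n /\<^sub>R fact n)" by (rule summable_exp_generic)
  have "real q ^ q /\<^sub>R fact q \<le> (\<Sum>n. real q ^ n /\<^sub>R fact n)"
    using sum_le_suminf[OF s, of "{q}"] by simp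
  also have "\<dots> = exp (real q)" by (simp add: exp_def)
  finally have "real q ^ q / fact q \<le> exp (real q)" by (simp add: divide_inverse mult.commute)
  then show ?thesis by (simp add: divide_le_eq)
qed

lemma extract_groups:
  fixes S :: "'x \<Rightarrow> 'a set"
  assumes "finite X" "\<forall>x\<in>X. finite (S x)" "q > 0"
    "\<forall>x\<in>X. \<forall>y\<in>X. x \<noteq> y \<longrightarrow> S x \<inter> S y = {}"
    "n \<le> (\<Sum>x\<in>X. card (S x) div q)"
  shows "\<exists>t. length t = n \<and> distinct t \<and> (\<forall>(x,G)\<in>set t. x\<in>X \<and> G \<subseteq> S x \<and> card G = q)
     \<and> (\<forall>g1\<in>set t. \<forall>g2\<in>set t. g1 \<noteq> g2 \<longrightarrow> snd g1 \<inter> snd g2 = {})"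
  using assms(2,4,5)
proof (induction n arbitrary: S)
  case 0
  then show ?case by auto
next
  case (Suc n)
  have "(\<Sum>x\<in>X. card (S x) div q) \<noteq> 0" using Suc.prems by simp
  then have "\<exists>x\<in>X. card (S x) div q \<noteq> 0"
  proof (rule contrapos_np)
    assume "\<not> (\<exists>x\<in>X. card (S x) div q \<noteq> 0)"
    then show "(\<Sum>x\<in>X. card (S x) div q) = 0" by simp
  qed
  then obtain x where x: "x \<in> X" "card (S x) div q \<noteq> 0" by blast
  then have qle: "q \<le> card (S x)" using div_less by (metis not_le)
  obtain G where G: "G \<subseteq> S x" "card G = q" using obtain_subset_with_card_n[OF qle] by blast
  define S' where "S' = S(x := S x - G)"
  have fin': "\<forall>y\<in>X. finite (S' y)" using Suc.prems(1) by (simp add: S'_def)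
  have disj': "\<forall>y\<in>X. \<forall>z\<in>X. y \<noteq> z \<longrightarrow> S' y \<inter> S' z = {}" using Suc.prems(2) by (auto simp: S'_def)
  have cx: "card (S' x) div q = card (S x) div q - 1"
  proof -
    have "card (S' x) = card (S x) - q" using G Suc.prems(1) x(1)
      by (simp add: S'_def card_Diff_subset finite_subset)
    moreover have "card (S x) div q = Suc ((card (S x) - q) div q)"
      using le_div_geq[OF assms(3) qle] by simp
    ultimately show ?thesis by simp
  qed
  have "(\<Sum>y\<in>X. card (S y) div q) = card (S x) div q + (\<Sum>y\<in>X-{x}. card (S y) div q)"
    using x(1) assms(1) by (simp add: sum.remove)
  moreover have "(\<Sum>y\<in>X. card (S' y) div q) = card (S' x) div q + (\<Sum>y\<in>X-{x}. card (S' y) div q)"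
    using x(1) assms(1) by (simp add: sum.remove)
  moreover have "(\<Sum>y\<in>X-{x}. card (S' y) div q) = (\<Sum>y\<in>X-{x}. card (S y) div q)"
    by (rule sum.cong) (auto simp: S'_def)
  ultimately have "n \<le> (\<Sum>y\<in>X. card (S' y) div q)" using Suc.prems(3) cx x(2) by linarith
  from Suc.IH[OF fin' disj' this] obtain t where t: "length t = n" "distinct t"
    "\<forall>(y,G')\<in>set t. y\<in>X \<and> G' \<subseteq> S' y \<and> card G' = q"
    "\<forall>g1\<in>set t. \<forall>g2\<in>set t. g1 \<noteq> g2 \<longrightarrow> snd g1 \<inter> snd g2 = {}" by blast
  have Gne: "G \<noteq> {}" using G assms(3) by auto
  have dj: "G \<inter> G' = {}" if "(y,G') \<in> set t" for y G'
  proof -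
    have y: "y \<in> X" "G' \<subseteq> S' y" using t(3) that by auto
    show ?thesis
    proof (cases "y = x")
      case True then show ?thesis using y by (auto simp: S'_def)
    next
      case False
      then have "S x \<inter> S y = {}" using Suc.prems(2) x(1) y(1) by blast
      moreover have "G' \<subseteq> S y" using y False by (auto simp: S'_def)
      ultimately show ?thesis using G by blast
    qed
  qed
  have notin: "(x,G) \<notin> set t" using dj Gne by blast
  have sub: "G' \<subseteq> S y" if "(y,G') \<in> set t" for y G'
  proof -
    have "G' \<subseteq> S' y" using t(3) that by blast
    then show ?thesis by (auto simp: S'_def split: if_splits)
  qed
  have p3: "\<forall>(y,G')\<in>set ((x,G) # t). y\<in>X \<and> G' \<subseteq> S y \<and> card G' = q"
    using t(3) sub G x(1) by fastforce
  have p4: "\<forall>g1\<in>set ((x,G) # t). \<forall>g2\<in>set ((x,G) # t). g1 \<noteq> g2 \<longrightarrow> snd g1 \<inter> snd g2 = {}"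
    using t(4) dj by fastforce
  show ?case
    using t(1,2) notin p3 p4 by (intro exI[of _ "(x,G) # t"]) simp
qed



lemma ln_le_half: "(y::real) > 0 \<Longrightarrow> ln y \<le> y / 2"
proof -
  assume y: "y > 0"
  have s: "sqrt y > 0" using y by simp
  have "ln (sqrt y) \<le> sqrt y - 1" using s by (rule ln_le_minus_one)
  moreover have "ln y = 2 * ln (sqrt y)" using y by (simp add: ln_sqrt)
  moreover have "2 * (sqrt y - 1) \<le> y / 2"
  proof -
    have "0 \<le> (sqrt y - 2)^2" by simp
    also have "\<dots> = y - 4 * sqrt y + 4" using y by (simp add: power2_eq_square algebra_simps)
    finally show ?thesis by simp
  qed
  ultimately have "ln y \<le> 2 * (sqrt y - 1)" by simp
  with \<open>2 * (sqrt y - 1) \<le> y / 2\<close> show ?thesis by linarith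
qed

lemma numeric:
  fixes m L l Jn :: nat and c :: real
  assumes m: "real m \<ge> 32" and c: "c \<ge> 1" and L: "L > 0" "real L \<le> 2 * real m powr c"
   and l: "real l \<ge> 150 * c * ln m / ln (ln m)"
  shows "(2 * real L * real m / fact (Suc l)) ^ (Jn div (4 * Suc l) + 1) \<le> exp (- real Jn * ln (real l) / 8)"
proof -
  define x where "x = ln (real m)"
  define y where "y = ln x"
  define q where "q = real (Suc l)"
  have e1: "exp 1 < (32::real)" using exp_le by simp
  have x1: "x > 1"
  proof -
    have "ln (exp 1) < ln (real m)" using e1 m by (subst ln_less_cancel_iff) auto
    then show ?thesis by (simp add: x_def)
  qed
  have y0: "y > 0" unfolding y_def using x1 by simp
  have lpos: "150 * c * x / y > 0" using c x1 y0 by simp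
  have lge: "real l \<ge> 150 * c * x / y" using l by (simp add: x_def y_def)
  have l0: "real l > 0" using lpos lge by linarith
  have ql: "real l \<le> q" by (simp add: q_def)
  have q0: "q > 0" by (simp add: q_def)
  define A where "A = 2 * real L * real m / fact (Suc l)"
  have A0: "A > 0" using L m by (simp add: A_def)
  have lnL: "ln (real L) \<le> ln 2 + c * x"
  proof -
    have "ln (real L) \<le> ln (2 * real m powr c)" using L m by (subst ln_le_cancel_iff) auto
    also have "\<dots> = ln 2 + c * x" using m by (simp add: ln_mult ln_powr x_def)
    finally show ?thesis .
  qed
  have lnfact: "q * ln q \<le> q + ln (fact (Suc l))"
  proof -
    have "q ^ Suc l \<le> exp q * fact (Suc l)" using pow_le_exp_fact[of "Suc l"] by (simp add: q_def)
    then have "ln (q ^ Suc l) \<le> ln (exp q * fact (Suc l))" using q0 by (simp del: fact_Suc)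
    moreover have "ln (q ^ Suc l) = q * ln q" using ln_realpow[of q "Suc l"] q0 by (simp add: q_def)
    moreover have "ln (exp q * fact (Suc l)) = q + ln (fact (Suc l))"
      using ln_mult[of "exp q" "fact (Suc l)"] by (simp del: fact_Suc)
    ultimately show ?thesis by simp
  qed
  have lnA: "ln A = ln 2 + ln (real L) + x - ln (fact (Suc l))"
    using L m by (simp add: A_def ln_mult ln_div x_def)
  have lnq: "ln q \<ge> 2 + y / 2"
  proof -
    have "ln (150 * c * x / y) \<le> ln q" using lpos lge ql by simp
    moreover have "ln (150 * c * x / y) = ln 150 + ln c + y - ln y"
      using c x1 y0 by (simp add: ln_mult ln_div y_def)
    moreover have "ln c \<ge> 0" using c by simp
    moreover have "ln y \<le> y / 2" using y0 by (rule ln_le_half)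
    moreover have "ln (150::real) \<ge> 2"
    proof -
      have "exp (1::real) * exp 1 \<le> 3 * 3" using exp_le by (intro mult_mono) auto
      then have "exp (2::real) \<le> 150" using exp_add[of "1::real" 1] by simp
      then have "ln (exp (2::real)) \<le> ln 150" by (subst ln_le_cancel_iff) auto
      then show ?thesis by simp
    qed
    ultimately show ?thesis by linarith
  qed
  have key: "q * (ln q / 2 - 1) \<ge> 150 * c * x / 4"
  proof -
    have "q * (ln q / 2 - 1) \<ge> (150 * c * x / y) * (y / 4)"
      using lge ql lnq y0 lpos by (intro mult_mono) auto
    also have "(150 * c * x / y) * (y / 4) = 150 * c * x / 4" using y0 by simp
    finally show ?thesis .
  qed
  have cx: "c * x \<ge> x" using c x1 by simp
  have ln4: "ln 2 \<le> (1::real)" using ln_le_minus_one[of 2] by simp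
  have lnA2: "ln A \<le> - q * ln (real l) / 2"
  proof -
    have "ln A \<le> 2 * ln 2 + 2 * c * x - q * ln q + q" using lnA lnL lnfact cx by linarith
    also have "\<dots> \<le> - q * ln q / 2"
    proof -
      have k2: "q * ln q / 2 - q \<ge> 150 * (c * x) / 4" using key by (simp add: algebra_simps)
      show ?thesis using k2 cx x1 ln4 by linarith
    qed
    also have "\<dots> \<le> - q * ln (real l) / 2" using ql l0 q0 by simp
    finally show ?thesis .
  qed
  define r where "r = Jn div (4 * Suc l) + 1"
  have r: "real r \<ge> real Jn / (4 * q)"
  proof -
    have "Jn < 4 * Suc l + 4 * Suc l * (Jn div (4 * Suc l))"
      by (rule dividend_less_times_div) simp
    then have "Jn \<le> 4 * Suc l * r" unfolding r_def by (simp add: algebra_simps)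
    then have "real Jn \<le> real (4 * Suc l * r)" by (simp only: of_nat_le_iff)
    then have "real Jn \<le> 4 * q * real r" unfolding q_def by simp
    then show ?thesis using q0 by (simp add: divide_le_eq mult.commute mult.left_commute)
  qed
  have lnl0: "ln (real l) \<ge> 0" using l0 by simp
  have "q * ln (real l) \<ge> 0" using q0 lnl0 by simp
  then have lnA0: "ln A \<le> 0" using lnA2 by linarith
  have "A ^ r = exp (real r * ln A)" using A0 by (simp add: exp_of_nat_mult)
  also have "\<dots> \<le> exp ((real Jn / (4 * q)) * ln A)"
    using mult_right_mono_neg[OF r lnA0] by simp
  also have "\<dots> \<le> exp ((real Jn / (4 * q)) * (- q * ln (real l) / 2))"
    by (subst exp_le_cancel_iff, rule mult_left_mono[OF lnA2]) (use q0 in simp)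
  also have "(real Jn / (4 * q)) * (- q * ln (real l) / 2) = - real Jn * ln (real l) / 8"
    using q0 by (simp add: field_simps)
  finally show ?thesis by (simp add: A_def r_def)
qed



lemma good_cong:
  assumes "\<forall>j\<in>J. h (seq j, ind j) = h' (seq j, ind j)"
  shows "good M L l h seq ind J = good M L l h' seq ind J"
proof -
  have "pattern_occurs M L h seq ind B = pattern_occurs M L h' seq ind B"
    if bp: "bad_pattern M L l seq J B" for B
  proof -
    have "virt h seq ind j i = virt h' seq ind j i" if "T < 2*L" "m \<in> M" "(j,i) \<in> B T m" for T m j i
    proof -
      have "j \<in> J" using bp that unfolding bad_pattern_def by blast
      then show ?thesis using assms by (simp add: virt_def)
    qed
    then show ?thesis unfolding pattern_occurs_def by fastforce
  qed
  then show ?thesis unfolding good_def by blast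
qed

theorem lemma5p15:
  fixes M :: "'m set" and J :: "'j set" and seq :: "'j \<Rightarrow> 'm list" and ind :: "'j \<Rightarrow> nat"
    and c :: real and L l :: nat
  assumes "finite M" and "card M \<ge> 32" and "c \<ge> 1"
    and "finite J"
    and "\<forall>j\<in>J. set (seq j) \<subseteq> M"
    and "\<forall>j\<in>J. ind j \<in> idx_set M c"
    and "inj_on ind J"
    and "real (card J) \<le> real (card M) powr c"
    and "real L \<le> 2 * real (card M) powr c"
    and "L \<ge> congestion M seq J + dilation seq J"
    and "real l \<ge> 150 * c * ln (card M) / ln (ln (card M))"
  shows "{h \<in> space (hash_space M c L). \<not> good M L l h seq ind J} \<in> sets (hash_space M c L)
    \<and> measure (hash_space M c L) {h \<in> space (hash_space M c L). \<not> good M L l h seq ind J}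
        \<le> exp (- real (card J) * ln (real l) / 8)"
proof -
  define key where "key = (\<lambda>j. (seq j, ind j))"
  define I where "I = lists M \<times> idx_set M c"
  define P where "P = measure_pmf (pmf_of_set {0..<L})"
  define H where "H = hash_space M c L"
  have H_def': "H = PiM I (\<lambda>_. P)" unfolding H_def hash_space_def I_def P_def ..
  have spP: "space P = UNIV" by (simp add: P_def)
  have spH: "space H = PiE I (\<lambda>_. UNIV)" by (simp add: H_def' space_PiM spP)
  have setsP: "sets P = UNIV" by (simp add: P_def)
  have probP: "prob_space P" by (simp add: P_def prob_space_measure_pmf)
  interpret H: prob_space H unfolding H_def' by (rule prob_space_PiM) (rule probP)
  have keyI: "key j \<in> I" if "j \<in> J" for j using assms(5,6) that by (auto simp: key_def I_def)
  have key_inj: "inj_on key J" using assms(7) by (auto simp: inj_on_def key_def)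
  define K where "K = key ` J"
  have finK: "finite K" using assms(4) by (simp add: K_def)
  define Bad where "Bad = {h \<in> space H. \<not> good M L l h seq ind J}"
  have comp: "{h \<in> space H. h k \<in> A} \<in> sets H" if "k \<in> I" for k A
  proof -
    have "(\<lambda>h. h k) \<in> measurable H P" unfolding H_def' using that by (rule measurable_component_singleton)
    then have "(\<lambda>h. h k) -` A \<inter> space H \<in> sets H" by (rule measurable_sets) (simp add: setsP)
    then show ?thesis by (simp add: vimage_def Int_def conj_commute)
  qed
  have Bad_eq: "Bad = (\<Union>r\<in>{r \<in> PiE K (\<lambda>_. UNIV). \<not> good M L l r seq ind J}. {h \<in> space H. \<forall>k\<in>K. h k = r k})"
  proof
    show "Bad \<subseteq> (\<Union>r\<in>{r \<in> PiE K (\<lambda>_. UNIV). \<not> good M L l r seq ind J}. {h \<in> space H. \<forall>k\<in>K. h k = r k})"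
    proof
      fix h assume h: "h \<in> Bad"
      have "good M L l (restrict h K) seq ind J = good M L l h seq ind J"
        by (rule good_cong) (simp add: K_def key_def)
      then show "h \<in> (\<Union>r\<in>{r \<in> PiE K (\<lambda>_. UNIV). \<not> good M L l r seq ind J}. {h \<in> space H. \<forall>k\<in>K. h k = r k})"
        using h unfolding Bad_def by (intro UN_I[of "restrict h K"]) auto
    qed
  next
    show "(\<Union>r\<in>{r \<in> PiE K (\<lambda>_. UNIV). \<not> good M L l r seq ind J}. {h \<in> space H. \<forall>k\<in>K. h k = r k}) \<subseteq> Bad"
    proof safe
      fix r h assume r: "r \<in> PiE K (\<lambda>_. UNIV)" "\<not> good M L l r seq ind J"
        and h: "h \<in> space H" "\<forall>k\<in>K. h k = r k"
      have "good M L l h seq ind J = good M L l r seq ind J"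
        by (rule good_cong) (use h in \<open>simp add: K_def key_def\<close>)
      then show "h \<in> Bad" using r h unfolding Bad_def by simp
    qed
  qed
  have Bad_sets: "Bad \<in> sets H"
    unfolding Bad_eq
  proof (rule sets.countable_UN'')
    show "countable {r \<in> PiE K (\<lambda>_. UNIV). \<not> good M L l r seq ind J}"
      by (rule countable_subset[OF _ countable_PiE[OF finK]]) auto
  next
    fix r
    show "{h \<in> space H. \<forall>k\<in>K. h k = r k} \<in> sets H"
    proof (rule sets.sets_Collect_finite_All[OF _ finK])
      fix k assume "k \<in> K"
      then have "k \<in> I" using keyI by (auto simp: K_def)
      from comp[OF this, of "{r k}"] show "{h \<in> space H. h k = r k} \<in> sets H" by simp
    qed
  qed
  have main: "measure H Bad \<le> exp (- real (card J) * ln (real l) / 8)"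
  proof -
    define q where "q = Suc l"
    have q0: "q > 0" by (simp add: q_def)
    define r0 where "r0 = card J div (4 * q) + 1"
    define Occ where "Occ m = Sigma J (\<lambda>j. {i. i < length (seq j) \<and> seq j ! i = m})" for m
    define Gs where "Gs = Sigma ({..<2*L} \<times> M) (\<lambda>x. {G. G \<subseteq> Occ (snd x) \<and> card G = q})"
    define Tup where "Tup = {t. set t \<subseteq> Gs \<and> length t = r0 \<and> distinct t \<and>
       (\<forall>g1\<in>set t. \<forall>g2\<in>set t. \<forall>a\<in>snd g1. \<forall>b\<in>snd g2. fst a = fst b \<longrightarrow> g1 = g2 \<and> a = b)}"
    define E where "E t = {h \<in> space H. \<forall>g\<in>set t. \<forall>a\<in>snd g. h (key (fst a)) + snd a = fst (fst g)}"
      for t :: "((nat \<times> 'm) \<times> ('j \<times> nat) set) list"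
    have finOcc: "finite (Occ m)" for m
      unfolding Occ_def using assms(4) by (intro finite_SigmaI) auto
    have cardOcc: "card (Occ m) \<le> L" if m: "m \<in> M" for m
    proof -
      have "card (Occ m) = (\<Sum>j\<in>J. occ seq j m)"
        unfolding Occ_def occ_def using assms(4) by (subst card_SigmaI) auto
      also have "\<dots> \<le> congestion M seq J"
        unfolding congestion_def using assms(1) m by (intro Max_ge) auto
      also have "\<dots> \<le> L" using assms(10) by simp
      finally show ?thesis .
    qed
    have finGs: "finite Gs"
      unfolding Gs_def using assms(1)
      by (intro finite_SigmaI) (auto intro: finite_subset[OF _ finite_Pow_iff[THEN iffD2, OF finOcc]])
    have cardGs: "card Gs * fact q \<le> 2 * L * card M * L ^ q"
    proof -
      have "card Gs = (\<Sum>x\<in>{..<2*L} \<times> M. card {G. G \<subseteq> Occ (snd x) \<and> card G = q})"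
        unfolding Gs_def using assms(1)
        by (subst card_SigmaI) (auto intro: finite_subset[OF _ finite_Pow_iff[THEN iffD2, OF finOcc]])
      also have "\<dots> = (\<Sum>x\<in>{..<2*L} \<times> M. card (Occ (snd x)) choose q)"
        by (intro sum.cong refl) (simp add: n_subsets[OF finOcc])
      finally have "card Gs * fact q = (\<Sum>x\<in>{..<2*L} \<times> M. (card (Occ (snd x)) choose q) * fact q)"
        by (simp add: sum_distrib_right)
      also have "\<dots> \<le> (\<Sum>x\<in>{..<2*L} \<times> M. L ^ q)"
      proof (intro sum_mono)
        fix x assume x: "x \<in> {..<2*L} \<times> M"
        have "(card (Occ (snd x)) choose q) * fact q \<le> card (Occ (snd x)) ^ q" by (rule binom_fact_le)
        also have "\<dots> \<le> L ^ q" using cardOcc x by (intro power_mono) auto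
        finally show "(card (Occ (snd x)) choose q) * fact q \<le> L ^ q" .
      qed
      also have "\<dots> = 2 * L * card M * L ^ q" by (simp add: card_cartesian_product)
      finally show ?thesis .
    qed
    have finTup: "finite Tup" and cardTup: "card Tup \<le> card Gs ^ r0"
    proof -
      have sub: "Tup \<subseteq> {t. set t \<subseteq> Gs \<and> length t = r0}" by (auto simp: Tup_def)
      show "finite Tup" by (rule finite_subset[OF sub finite_lists_length_eq[OF finGs]])
      show "card Tup \<le> card Gs ^ r0"
        using card_mono[OF finite_lists_length_eq[OF finGs] sub] by (simp add: card_lists_length_eq[OF finGs])
    qed
    have cover: "Bad \<subseteq> (\<Union>t\<in>Tup. E t)"
    proof
      fix h assume h: "h \<in> Bad"
      then have hsp: "h \<in> space H" and "\<not> good M L l h seq ind J" by (auto simp: Bad_def)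
      then obtain B where bp: "bad_pattern M L l seq J B" and oc: "pattern_occurs M L h seq ind B"
        by (auto simp: good_def)
      have bp1: "j \<in> J \<and> i < length (seq j) \<and> seq j ! i = m"
        if "T < 2*L" "m \<in> M" "(j,i) \<in> B T m" for T m j i
        using bp that unfolding bad_pattern_def by blast
      have bp2: "T1 = T2 \<and> m1 = m2 \<and> i1 = i2"
        if "T1 < 2*L" "m1 \<in> M" "T2 < 2*L" "m2 \<in> M" "(j,i1) \<in> B T1 m1" "(j,i2) \<in> B T2 m2"
        for T1 m1 T2 m2 j i1 i2
        using bp that unfolding bad_pattern_def by blast
      have bp3: "card (B T m) = 0 \<or> l < card (B T m)" if "T < 2*L" "m \<in> M" for T m
        using bp that unfolding bad_pattern_def by blast
      have bp4: "real (\<Sum>T<2*L. \<Sum>m\<in>M. card (B T m)) > real (card J) / 2"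
        using bp unfolding bad_pattern_def by blast
      have oc1: "virt h seq ind j i = enat T" if "T < 2*L" "m \<in> M" "(j,i) \<in> B T m" for T m j i
        using oc that unfolding pattern_occurs_def by blast
      define X0 where "X0 = {..<2*L} \<times> M"
      define S where "S x = B (fst x) (snd x)" for x
      have finX0: "finite X0" using assms(1) by (simp add: X0_def)
      have SOcc: "S x \<subseteq> Occ (snd x)" if "x \<in> X0" for x
        using bp1 that by (force simp: S_def X0_def Occ_def)
      have finS: "\<forall>x\<in>X0. finite (S x)" using SOcc finOcc finite_subset by blast
      have Sdisj: "\<forall>x\<in>X0. \<forall>y\<in>X0. x \<noteq> y \<longrightarrow> S x \<inter> S y = {}"
      proof (intro ballI impI)
        fix x y assume xy: "x \<in> X0" "y \<in> X0" "x \<noteq> y"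
        show "S x \<inter> S y = {}"
        proof (rule ccontr)
          assume "S x \<inter> S y \<noteq> {}"
          then obtain j i where "(j,i) \<in> S x" "(j,i) \<in> S y" by auto
          then have "fst x = fst y \<and> snd x = snd y" using bp2 xy by (auto simp: S_def X0_def)
          then show False using xy(3) by (simp add: prod_eq_iff)
        qed
      qed
      have sumS: "r0 \<le> (\<Sum>x\<in>X0. card (S x) div q)"
      proof -
        have each: "card (S x) \<le> 2 * q * (card (S x) div q)" if xX0: "x \<in> X0" for x
        proof -
          obtain T m where Tm: "x = (T,m)" "T < 2*L" "m \<in> M" using xX0 by (cases x) (auto simp: X0_def)
          from bp3[OF Tm(2,3)] have "card (S x) = 0 \<or> q \<le> card (S x)" by (auto simp: Tm(1) S_def q_def)
          then show ?thesis
          proof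
            assume qle: "q \<le> card (S x)"
            then have d: "1 \<le> card (S x) div q" using q0 by (metis One_nat_def Suc_leI div_greater_zero_iff)
            have "card (S x) = q * (card (S x) div q) + card (S x) mod q" by simp
            moreover have "card (S x) mod q < q" using q0 by simp
            moreover have "q \<le> q * (card (S x) div q)" using d by simp
            ultimately show ?thesis by linarith
          qed simp
        qed
        have "(\<Sum>x\<in>X0. card (S x)) = (\<Sum>T<2*L. \<Sum>m\<in>M. card (B T m))"
          unfolding X0_def S_def by (simp add: sum.cartesian_product case_prod_beta)
        then have "real (card J) < 2 * real (\<Sum>x\<in>X0. card (S x))" using bp4 by simp
        then have c1: "card J < 2 * (\<Sum>x\<in>X0. card (S x))" by linarith
        have "(\<Sum>x\<in>X0. card (S x)) \<le> (\<Sum>x\<in>X0. 2 * q * (card (S x) div q))"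
          using each by (intro sum_mono) auto
        also have "\<dots> = 2 * q * (\<Sum>x\<in>X0. card (S x) div q)" by (simp add: sum_distrib_left)
        finally have "card J < 2 * (2 * q * (\<Sum>x\<in>X0. card (S x) div q))" using c1 by linarith
        then have "card J < (\<Sum>x\<in>X0. card (S x) div q) * (4 * q)" by (simp add: algebra_simps)
        then have "card J div (4 * q) < (\<Sum>x\<in>X0. card (S x) div q)"
          using q0 by (simp add: div_less_iff_less_mult)
        then show ?thesis by (simp add: r0_def)
      qed
      obtain t where t: "length t = r0" "distinct t" "\<forall>(x,G)\<in>set t. x\<in>X0 \<and> G \<subseteq> S x \<and> card G = q"
        "\<forall>g1\<in>set t. \<forall>g2\<in>set t. g1 \<noteq> g2 \<longrightarrow> snd g1 \<inter> snd g2 = {}"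
        using extract_groups[OF finX0 finS q0 Sdisj sumS] by blast
      have tG: "x \<in> X0 \<and> G \<subseteq> S x \<and> card G = q" if "(x,G) \<in> set t" for x G
        using t(3) that by blast
      have "set t \<subseteq> Gs"
      proof
        fix g assume g: "g \<in> set t"
        obtain x G where xG: "g = (x,G)" by fastforce
        then show "g \<in> Gs" using tG[of x G] g SOcc by (auto simp: Gs_def X0_def)
      qed
      moreover have "\<forall>g1\<in>set t. \<forall>g2\<in>set t. \<forall>a\<in>snd g1. \<forall>b\<in>snd g2. fst a = fst b \<longrightarrow> g1 = g2 \<and> a = b"
      proof (intro ballI impI)
        fix g1 g2 a b assume g: "g1 \<in> set t" "g2 \<in> set t" "a \<in> snd g1" "b \<in> snd g2" "fst a = fst b"
        obtain x1 G1 where 1: "g1 = (x1,G1)" by fastforce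
        obtain x2 G2 where 2: "g2 = (x2,G2)" by fastforce
        have x1: "x1 \<in> X0" "G1 \<subseteq> S x1" using tG 1 g by auto
        have x2: "x2 \<in> X0" "G2 \<subseteq> S x2" using tG 2 g by auto
        have aS0: "a \<in> B (fst x1) (snd x1)" using x1 g 1 by (auto simp: S_def)
        have bS0: "b \<in> B (fst x2) (snd x2)" using x2 g 2 by (auto simp: S_def)
        have aS: "(fst a, snd a) \<in> B (fst x1) (snd x1)" using aS0 by simp
        have bS: "(fst a, snd b) \<in> B (fst x2) (snd x2)" using bS0 g(5) by (metis prod.collapse)
        have "snd a = snd b" using bp2[OF _ _ _ _ aS bS] x1 x2 by (auto simp: X0_def)
        then have ab: "a = b" using g(5) by (simp add: prod_eq_iff)
        then have "snd g1 \<inter> snd g2 \<noteq> {}" using g by auto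
        then have "g1 = g2" using t(4) g by blast
        then show "g1 = g2 \<and> a = b" using ab by simp
      qed
      ultimately have tT: "t \<in> Tup" using t by (simp add: Tup_def)
      have "h \<in> E t"
        unfolding E_def
      proof (intro CollectI conjI ballI hsp)
        fix g a assume g: "g \<in> set t" "a \<in> snd g"
        obtain x G where 1: "g = (x,G)" by fastforce
        obtain j i where 2: "a = (j,i)" by fastforce
        have x: "x \<in> X0" "(j,i) \<in> B (fst x) (snd x)" using tG[of x G] g 1 2 by (auto simp: S_def)
        have T: "fst x < 2*L" "snd x \<in> M" using x by (auto simp: X0_def)
        have "virt h seq ind j i = enat (fst x)" by (rule oc1[OF T x(2)])
        moreover have "i < length (seq j)" using bp1[OF T x(2)] by simp
        ultimately show "h (key (fst a)) + snd a = fst (fst g)" using 1 2 by (simp add: virt_def key_def)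
      qed
      then show "h \<in> (\<Union>t\<in>Tup. E t)" using tT by blast
    qed
    have gsub: "snd g \<subseteq> Occ (snd (fst g)) \<and> finite (snd g) \<and> card (snd g) = q \<and> fst (fst g) < 2 * L"
      if "t \<in> Tup" "g \<in> set t" for t g
    proof -
      have "g \<in> Gs" using that by (auto simp: Tup_def)
      then obtain T m G where "g = ((T,m),G)" "T < 2*L" "G \<subseteq> Occ m" "card G = q"
        by (auto simp: Gs_def)
      then show ?thesis using finite_subset[OF _ finOcc] by auto
    qed
    have OccJ: "fst a \<in> J \<and> snd a < length (seq (fst a))" if "a \<in> Occ m" for a m
      using that by (auto simp: Occ_def)
    have Esets: "E t \<in> sets H" if t: "t \<in> Tup" for t
      unfolding E_def
    proof (rule sets.sets_Collect_finite_All)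
      fix g assume g: "g \<in> set t"
      show "{h \<in> space H. \<forall>a\<in>snd g. h (key (fst a)) + snd a = fst (fst g)} \<in> sets H"
      proof (rule sets.sets_Collect_finite_All)
        fix a assume a: "a \<in> snd g"
        have "key (fst a) \<in> I" using gsub[OF t g] a OccJ keyI by blast
        from comp[OF this, of "{v. v + snd a = fst (fst g)}"]
        show "{h \<in> space H. h (key (fst a)) + snd a = fst (fst g)} \<in> sets H" by simp
      qed (use gsub[OF t g] in simp)
    qed simp
    have Emeas: "measure H (E t) \<le> (1 / real L) ^ (r0 * q)" if t: "t \<in> Tup" for t
    proof -
      have disj: "\<forall>g1\<in>set t. \<forall>g2\<in>set t. \<forall>a\<in>snd g1. \<forall>b\<in>snd g2. fst a = fst b \<longrightarrow> g1 = g2 \<and> a = b"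
        and lt: "length t = r0" and dt: "distinct t" using t by (auto simp: Tup_def)
      have "t \<noteq> []" using lt by (auto simp: r0_def)
      then obtain g0 where "g0 \<in> set t" by (cases t) auto
      then have L0: "L > 0" using gsub[OF t] by fastforce
      define U where "U = \<Union>(snd ` set t)"
      have UJ: "fst a \<in> J" if "a \<in> U" for a
        using that gsub[OF t] OccJ unfolding U_def by blast
      have finU: "finite U" unfolding U_def using gsub[OF t] by auto
      define Kt where "Kt = (\<lambda>a. key (fst a)) ` U"
      define X where "X k = {v. \<exists>g\<in>set t. \<exists>a\<in>snd g. key (fst a) = k \<and> v + snd a = fst (fst g)}" for k
      have KtI: "Kt \<subseteq> I" using UJ keyI by (auto simp: Kt_def)
      have finKt: "finite Kt" using finU by (simp add: Kt_def)
      have sub: "E t \<subseteq> prod_emb I (\<lambda>_. P) Kt (PiE Kt X)"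
      proof
        fix h assume h: "h \<in> E t"
        have "h \<in> PiE I (\<lambda>i. space P)" using h spH spP by (simp add: E_def)
        moreover have "h k \<in> X k" if "k \<in> Kt" for k
          using that h unfolding Kt_def U_def X_def E_def by blast
        ultimately show "h \<in> prod_emb I (\<lambda>_. P) Kt (PiE Kt X)"
          unfolding prod_emb_def by auto
      qed
      have sets_emb: "prod_emb I (\<lambda>_. P) Kt (PiE Kt X) \<in> sets H"
        unfolding H_def' by (rule sets_PiM_I) (auto simp: finKt KtI setsP)
      have "measure H (E t) \<le> measure H (prod_emb I (\<lambda>_. P) Kt (PiE Kt X))"
        by (rule H.finite_measure_mono[OF sub sets_emb])
      also have "\<dots> = (\<Prod>k\<in>Kt. measure P (X k))"
      proof -
        have "emeasure H (prod_emb I (\<lambda>_. P) Kt (PiE Kt X)) = (\<Prod>k\<in>Kt. emeasure P (X k))"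
          unfolding H_def' by (rule emeasure_PiM_emb) (auto simp: probP finKt KtI setsP)
        also have "\<dots> = ennreal (\<Prod>k\<in>Kt. measure P (X k))"
          by (simp add: P_def measure_pmf.emeasure_eq_measure prod_ennreal)
        finally show ?thesis by (simp add: measure_def prod_nonneg)
      qed
      also have "\<dots> \<le> (\<Prod>k\<in>Kt. 1 / real L)"
      proof (rule prod_mono)
        fix k assume k: "k \<in> Kt"
        have "card ({0..<L} \<inter> X k) \<le> Suc 0"
        proof (subst card_le_Suc0_iff_eq, simp, intro ballI)
          fix v1 v2 assume v: "v1 \<in> {0..<L} \<inter> X k" "v2 \<in> {0..<L} \<inter> X k"
          then obtain g1 a1 g2 a2 where g: "g1 \<in> set t" "a1 \<in> snd g1" "key (fst a1) = k"
            "v1 + snd a1 = fst (fst g1)" "g2 \<in> set t" "a2 \<in> snd g2" "key (fst a2) = k"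
            "v2 + snd a2 = fst (fst g2)" unfolding X_def by blast
          have "fst a1 \<in> J" "fst a2 \<in> J" using g UJ unfolding U_def by blast+
          then have "fst a1 = fst a2" using g key_inj by (metis inj_onD)
          then have "g1 = g2 \<and> a1 = a2" using disj g by blast
          then show "v1 = v2" using g by simp
        qed
        then show "0 \<le> measure P (X k) \<and> measure P (X k) \<le> 1 / real L"
          using L0 by (simp add: P_def measure_pmf_of_set divide_right_mono)
      qed
      also have "\<dots> = (1 / real L) ^ card Kt" by simp
      also have "card Kt = r0 * q"
      proof -
        have "inj_on (\<lambda>a. key (fst a)) U"
        proof (rule inj_onI)
          fix a b assume ab: "a \<in> U" "b \<in> U" "key (fst a) = key (fst b)"
          then have "fst a = fst b" using UJ key_inj by (metis inj_onD)
          then show "a = b" using ab disj unfolding U_def by blast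
        qed
        then have "card Kt = card U" by (simp add: Kt_def card_image)
        also have "\<dots> = (\<Sum>g\<in>set t. card (snd g))"
          unfolding U_def
        proof (rule card_UN_disjoint)
          show "\<forall>g\<in>set t. \<forall>g'\<in>set t. g \<noteq> g' \<longrightarrow> snd g \<inter> snd g' = {}" using disj by blast
        qed (use gsub[OF t] in auto)
        also have "\<dots> = (\<Sum>g\<in>set t. q)" using gsub[OF t] by simp
        also have "\<dots> = r0 * q" using lt dt by (simp add: distinct_card)
        finally show ?thesis .
      qed
      finally show ?thesis .
    qed
    have "measure H Bad \<le> measure H (\<Union>t\<in>Tup. E t)"
      using cover Esets finTup by (intro H.finite_measure_mono) auto
    also have "\<dots> \<le> (\<Sum>t\<in>Tup. measure H (E t))"
      using Esets finTup by (intro measure_UNION_le) auto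
    also have "\<dots> \<le> (\<Sum>t\<in>Tup. (1 / real L) ^ (r0 * q))"
      using Emeas by (intro sum_mono) auto
    also have "\<dots> = real (card Tup) * (1 / real L) ^ (r0 * q)" by simp
    also have "\<dots> \<le> exp (- real (card J) * ln (real l) / 8)"
    proof (cases "L = 0")
      case True
      then have "Gs = {}" by (simp add: Gs_def)
      then have "Tup = {}" by (auto simp: Tup_def r0_def)
      then show ?thesis by simp
    next
      case False
      then have L0: "L > 0" by simp
      have "real (card Tup) * (1 / real L) ^ (r0 * q) \<le> real (card Gs) ^ r0 * (1 / real L) ^ (r0 * q)"
        using cardTup by (intro mult_right_mono) (simp_all add: of_nat_le_iff[symmetric] del: of_nat_le_iff)
      also have "\<dots> = (real (card Gs) / real L ^ q) ^ r0"
        by (simp add: power_mult power_divide divide_inverse power_mult_distrib mult.commute power_inverse)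
      also have "\<dots> \<le> (2 * real L * real (card M) / fact q) ^ r0"
      proof (rule power_mono)
        have "real (card Gs) * fact q \<le> 2 * real L * real (card M) * real L ^ q"
          using cardGs by (metis (mono_tags) of_nat_le_iff of_nat_mult of_nat_numeral of_nat_power of_nat_fact)
        then show "real (card Gs) / real L ^ q \<le> 2 * real L * real (card M) / fact q"
          using L0 by (simp add: divide_simps mult.commute mult.left_commute)
      qed simp
      also have "\<dots> \<le> exp (- real (card J) * ln (real l) / 8)"
        unfolding r0_def q_def
        by (rule numeric) (use assms(2,3,9,11) L0 in auto)
      finally show ?thesis .
    qed
    finally show ?thesis .
  qed
  show ?thesis using Bad_sets main unfolding Bad_def H_def by simp
qed

end
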